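(* Let $(\mathcal M,P_1,P_2)$ be a bi-Hamiltonian manifold, let $\mathcal S$ be a symplectic leaf of $P_1$, let $D=P_2(\ker P_1)$ and $E=D\cap T\mathcal S$, and let $\mathcal Q\subset\mathcal S$ be a submanifold transversal to $E$, i.e. $T_{\mathbf w}\mathcal Q\oplus E_{\mathbf w}=T_{\mathbf w}\mathcal S$ for all $\mathbf w\in\mathcal Q$. Choose coordinates on $\mathcal M$ adapted to $\mathcal Q$ (the first group of coordinates restricts to coordinates on $\mathcal Q$, and $\mathcal Q$ is given by the vanishing of the second group), and write the matrix of the Poisson pencil $P_{(\lambda)}=P_2-\lambda P_1$ in block form $$P_{(\lambda)}=\begin{pmatrix}A_{(\lambda)}&B_{(\lambda)}\\ C_{(\lambda)}&D_{(\lambda)}\end{pmatrix}.$$ Suppose that $(\ker P_1)_{\mathbf w}\cap(\ker P_2)_{\mathbf w}=\{0\}$ for all $\mathbf w\in\mathcal Q$. Then: (a) the matrix $D_{(\lambda)}$ is invertible; (b) the matrix representing the reduced Poisson pencil $P'_{(\lambda)}$ on $\mathcal Q$ is $A_{(\lambda)}-B_{(\lambda)}D_{(\lambda)}^{-1}C_{(\lambda)}$; (c) the identity $$P_{(\lambda)}=\begin{pmatrix}P'_{(\lambda)}&B_{(\lambda)}\\0&D_{(\lambda)}\end{pmatrix}\begin{pmatrix}\mathrm{Id}&0\\ D_{(\lambda)}^{-1}C_{(\lambda)}&\mathrm{Id}\end{pmatrix}$$ holds, where $\mathrm{Id}$ denotes identity matrices of the appropriate sizes.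
   Context: For a Poisson tensor $P_a$, the bracket is $\{F,G\}_a=\langle dG,P_a dF\rangle$. The reduced Poisson pencil on the transversal submanifold $\mathcal Q$ is defined as follows: given $\mathbf w\in\mathcal Q$ and $\mathbf v\in T^*_{\mathbf w}\mathcal Q$, one takes an extension $\widehat{\mathbf v}\in T^*_{\mathbf w}\mathcal M$ of $\mathbf v$ such that $(P_{(\lambda)})_{\mathbf w}\widehat{\mathbf v}\in T_{\mathbf w}\mathcal Q$ (such an extension exists), and sets $(P'_{(\lambda)})_{\mathbf w}\mathbf v=(P_{(\lambda)})_{\mathbf w}\widehat{\mathbf v}$. Equivalently, the reduced brackets are $\{f,g\}'_a(\mathbf w)=\{F,G\}_a(\mathbf w)$ for $\mathbf w\in\mathcal Q$, where $F,G$ are extensions of $f,g$ to $\mathcal M$ whose differentials vanish on $D_{\mathbf w}$ for all $\mathbf w\in\mathcal Q$. Geometric objects and the matrices representing them in the chosen coordinates are denoted by the same symbols. *)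

theory Defs
  imports "Jordan_Normal_Form.Gauss_Jordan_Elimination" "Jordan_Normal_Form.Matrix_Kernel"
begin

text \<open>Pointwise (linear-algebraic) model at a point w of Q, in coordinates adapted to Q.
  Covectors and tangent vectors at w are both represented by their coordinate vectors
  in carrier_vec n; a Poisson tensor P acts on covectors by the matrix-vector product.\<close>

definition skew_mat :: "nat \<Rightarrow> real mat \<Rightarrow> bool" where
  "skew_mat n P \<longleftrightarrow> P \<in> carrier_mat n n \<and> transpose_mat P = - P"

definition mat_image :: "nat \<Rightarrow> real mat \<Rightarrow> real vec set" where
  "mat_image n P = (\<lambda>a. P *\<^sub>v a) ` carrier_vec n"

definition pencil :: "real mat \<Rightarrow> real mat \<Rightarrow> real \<Rightarrow> real mat" where
  "pencil P1 P2 lam = P2 - lam \<cdot>\<^sub>m P1"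

text \<open>Tangent space of Q at w in adapted coordinates: the first k coordinates are
  coordinates on Q, Q is cut out by the vanishing of the remaining n-k ones.\<close>
definition adapted_tangent :: "nat \<Rightarrow> nat \<Rightarrow> real vec set" where
  "adapted_tangent n k = {v \<in> carrier_vec n. \<forall>i. k \<le> i \<and> i < n \<longrightarrow> v $ i = 0}"

definition vsum :: "real vec set \<Rightarrow> real vec set \<Rightarrow> real vec set" where
  "vsum U W = {u + w | u w. u \<in> U \<and> w \<in> W}"

definition direct_sum_eq :: "nat \<Rightarrow> real vec set \<Rightarrow> real vec set \<Rightarrow> real vec set \<Rightarrow> bool" where
  "direct_sum_eq n U W V \<longleftrightarrow> vsum U W = V \<and> U \<inter> W = {0\<^sub>v n}"

definition minv :: "real mat \<Rightarrow> real mat" where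
  "minv D = the (mat_inverse D)"

end

theory Submission
  imports Defs
begin

lemma smult_mat_vec_assoc:
  assumes "P \<in> carrier_mat n n" "a \<in> carrier_vec n"
  shows "(c \<cdot>\<^sub>m P) *\<^sub>v a = c \<cdot>\<^sub>v (P *\<^sub>v (a :: real vec))"
  using assms by (intro eq_vecI) (auto simp: scalar_prod_def sum_distrib_left ac_simps)

lemma pencil_vec:
  assumes "P1 \<in> carrier_mat n n" "P2 \<in> carrier_mat n n" "a \<in> carrier_vec n"
  shows "pencil P1 P2 lam *\<^sub>v a = P2 *\<^sub>v a - lam \<cdot>\<^sub>v (P1 *\<^sub>v a)"
  unfolding pencil_def
  using assms by (subst minus_mult_distrib_mat_vec[of _ n n]) (auto simp: smult_mat_vec_assoc)

lemma skew_pair: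
  assumes "skew_mat n P" "a \<in> carrier_vec n" "b \<in> carrier_vec n"
  shows "a \<bullet> (P *\<^sub>v b) = - (b \<bullet> (P *\<^sub>v a))"
proof -
  have P: "P \<in> carrier_mat n n" and T: "transpose_mat P = - P" using assms(1) unfolding skew_mat_def by auto
  have "a \<bullet> (P *\<^sub>v b) = (transpose_mat P *\<^sub>v a) \<bullet> b"
    using transpose_vec_mult_scalar[OF P assms(3) assms(2)] by simp
  also have "\<dots> = - ((P *\<^sub>v a) \<bullet> b)" using P assms by (simp add: T)
  also have "(P *\<^sub>v a) \<bullet> b = b \<bullet> (P *\<^sub>v a)" using P assms by (intro comm_scalar_prod[of _ n]) auto
  finally show ?thesis .
qed

lemma zero_by_pairing:
  assumes "v \<in> carrier_vec n" "\<And>g. g \<in> carrier_vec n \<Longrightarrow> g \<bullet> v = (0::real)"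
  shows "v = 0\<^sub>v n"
proof (rule eq_vecI)
  fix i assume "i < dim_vec (0\<^sub>v n :: real vec)"
  hence i: "i < n" by simp
  have "unit_vec n i \<bullet> v = v $ i" using assms(1) i by simp
  thus "v $ i = 0\<^sub>v n $ i" using assms(2)[of "unit_vec n i"] i by simp
qed (use assms in auto)

lemma mat_vec_zero[simp]: "A \<in> carrier_mat r c \<Longrightarrow> A *\<^sub>v 0\<^sub>v c = (0\<^sub>v r :: real vec)"
  by (intro eq_vecI) auto

lemma smult_zero_vec_real[simp]: "c \<cdot>\<^sub>v 0\<^sub>v n = (0\<^sub>v n :: real vec)"
  by (intro eq_vecI) auto

lemma mat_vec_uminus:
  assumes A: "A \<in> carrier_mat r c" and w: "w \<in> carrier_vec c"
  shows "A *\<^sub>v (- w) = - (A *\<^sub>v (w :: real vec))"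
proof (rule eq_vecI)
  show "dim_vec (A *\<^sub>v (- w)) = dim_vec (- (A *\<^sub>v w))" by simp
  fix i assume "i < dim_vec (- (A *\<^sub>v w))"
  hence i: "i < dim_row A" by simp
  have dw: "dim_vec (row A i) = dim_vec w" using A w by simp
  have "(A *\<^sub>v (- w)) $ i = row A i \<bullet> (- w)" using i by simp
  also have "\<dots> = - (row A i \<bullet> w)" using scalar_prod_uminus_right[OF dw] .
  also have "\<dots> = (- (A *\<^sub>v w)) $ i" using i by simp
  finally show "(A *\<^sub>v (- w)) $ i = (- (A *\<^sub>v w)) $ i" .
qed

lemma add_eq_zero_vec:
  assumes ac: "a \<in> carrier_vec m" and bc: "b \<in> carrier_vec m" and ab: "a + b = 0\<^sub>v m"
  shows "b = - (a :: real vec)"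
proof -
  have da: "dim_vec a = m" and db: "dim_vec b = m" using ac bc by (auto simp only: carrier_vec_def mem_Collect_eq)
  show ?thesis
  proof (rule eq_vecI)
    show "dim_vec b = dim_vec (- a)" using da db by simp
    fix i assume "i < dim_vec (- a)"
    hence i: "i < m" using da by simp
    have "(a + b) $ i = 0" unfolding ab using i by simp
    moreover have "(a + b) $ i = a $ i + b $ i" using i db by simp
    moreover have "(- a) $ i = - (a $ i)" using da i by simp
    ultimately show "b $ i = (- a) $ i" by linarith
  qed
qed

lemma minus_plus_mat:
  assumes A: "A \<in> carrier_mat r c" and X: "X \<in> carrier_mat r c"
  shows "A - X + X = (A :: real mat)"
proof (rule eq_matI)
  fix i j assume "i < dim_row A" "j < dim_col A"
  hence i: "i < r" "j < c" using A by auto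
  thus "(A - X + X) $$ (i, j) = A $$ (i, j)" using A X by simp
qed (use A X in simp)+

lemma vec_first_app: "v \<in> carrier_vec k \<Longrightarrow> vec_first (v @\<^sub>v w) k = v"
  by (intro eq_vecI) (auto simp: vec_first_def)

lemma app_in_tangent:
  fixes a b :: "real vec"
  assumes "a \<in> carrier_vec k" "b \<in> carrier_vec m" "n = k + m"
  shows "(a @\<^sub>v b \<in> adapted_tangent n k) \<longleftrightarrow> b = 0\<^sub>v m"
proof
  assume h: "a @\<^sub>v b \<in> adapted_tangent n k"
  show "b = 0\<^sub>v m"
  proof (rule eq_vecI)
    fix i assume "i < dim_vec (0\<^sub>v m :: real vec)"
    hence i: "i < m" by simp
    have "\<forall>j. k \<le> j \<and> j < k + m \<longrightarrow> b $ (j - k) = 0" using h assms unfolding adapted_tangent_def by auto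
    hence "b $ (k + i - k) = 0" using i by (metis add_less_cancel_left le_add1)
    thus "b $ i = 0\<^sub>v m $ i" using i by simp
  qed (use assms in auto)
next
  assume "b = 0\<^sub>v m"
  thus "a @\<^sub>v b \<in> adapted_tangent n k" using assms unfolding adapted_tangent_def by auto
qed

lemma zero_app: "0\<^sub>v (k + m) = (0\<^sub>v k :: real vec) @\<^sub>v 0\<^sub>v m"
  by (intro eq_vecI) auto

lemma ortho_tangent:
  assumes "x \<in> carrier_vec m" "u \<in> adapted_tangent n k" "n = k + m"
  shows "(0\<^sub>v k @\<^sub>v x) \<bullet> u = (0::real)"
  using assms unfolding adapted_tangent_def scalar_prod_def
  by (intro sum.neutral) auto

theorem proposition3p1:
  fixes n k :: nat and P1 P2 :: "real mat" and lam :: real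
    and A B C D :: "real mat"
  assumes P1: "skew_mat n P1" and P2: "skew_mat n P2"
    and kn: "k \<le> n"
    \<comment> \<open>T_w S = Im P1, D_w = P2(ker P1), E_w = D_w \<inter> T_w S, T_w Q (+) E_w = T_w S\<close>
    and transversal: "direct_sum_eq n (adapted_tangent n k)
         ((\<lambda>a. P2 *\<^sub>v a) ` mat_kernel P1 \<inter> mat_image n P1) (mat_image n P1)"
    and kernels: "mat_kernel P1 \<inter> mat_kernel P2 = {0\<^sub>v n}"
    and blocks: "split_block (pencil P1 P2 lam) k k = (A, B, C, D)"
  shows "invertible_mat D
    \<and> (\<forall>v \<in> carrier_vec k.
          (\<exists>vh \<in> carrier_vec n. vec_first vh k = v
              \<and> pencil P1 P2 lam *\<^sub>v vh \<in> adapted_tangent n k)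
        \<and> (\<forall>vh \<in> carrier_vec n. vec_first vh k = v
              \<and> pencil P1 P2 lam *\<^sub>v vh \<in> adapted_tangent n k
              \<longrightarrow> pencil P1 P2 lam *\<^sub>v vh = ((A - B * minv D * C) *\<^sub>v v) @\<^sub>v 0\<^sub>v (n - k)))
    \<and> pencil P1 P2 lam
        = four_block_mat (A - B * minv D * C) B (0\<^sub>m (n - k) k) D
          * four_block_mat (1\<^sub>m k) (0\<^sub>m k (n - k)) (minv D * C) (1\<^sub>m (n - k))"
proof -
  define m where "m = n - k"
  have nkm: "n = k + m" using kn m_def by auto
  have P1c: "P1 \<in> carrier_mat n n" using P1 unfolding skew_mat_def by auto
  have P2c: "P2 \<in> carrier_mat n n" using P2 unfolding skew_mat_def by auto
  let ?P = "pencil P1 P2 lam"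
  have Pc: "?P \<in> carrier_mat n n" unfolding pencil_def using P1c P2c by auto
  have dims: "dim_row ?P = k + m" "dim_col ?P = k + m" using Pc nkm by auto
  note sb = split_block[OF blocks dims]
  have Ac: "A \<in> carrier_mat k k" and Bc: "B \<in> carrier_mat k m"
    and Cc: "C \<in> carrier_mat m k" and Dc: "D \<in> carrier_mat m m" using sb by auto
  have Peq: "?P = four_block_mat A B C D" using sb by auto
  define U where "U = adapted_tangent n k"
  define W where "W = (\<lambda>a. P2 *\<^sub>v a) ` mat_kernel P1 \<inter> mat_image n P1"
  define I where "I = mat_image n P1"
  have sumUW: "vsum U W = I" and capUW: "U \<inter> W = {0\<^sub>v n}"
    using transversal unfolding direct_sum_eq_def U_def W_def I_def by auto
  have z1: "0\<^sub>v n \<in> mat_kernel P1" using P1c by (intro mat_kernelI) auto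
  have zW: "0\<^sub>v n \<in> W" unfolding W_def mat_image_def
  proof
    show "0\<^sub>v n \<in> (\<lambda>a. P2 *\<^sub>v a) ` mat_kernel P1"
      using z1 P2c by (intro image_eqI[of _ _ "0\<^sub>v n"]) auto
    show "0\<^sub>v n \<in> (\<lambda>a. P1 *\<^sub>v a) ` carrier_vec n"
      using P1c by (intro image_eqI[of _ _ "0\<^sub>v n"]) auto
  qed
  have Ucar: "U \<subseteq> carrier_vec n" unfolding U_def adapted_tangent_def by auto
  have UI: "U \<subseteq> I"
  proof
    fix u assume u: "u \<in> U"
    have "u + 0\<^sub>v n \<in> vsum U W" unfolding vsum_def using u zW by blast
    thus "u \<in> I" using sumUW u Ucar by auto
  qed
  have Icases: "\<exists>u w. u \<in> U \<and> w \<in> W \<and> P1 *\<^sub>v g = u + w" if g: "g \<in> carrier_vec n" for g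
  proof -
    have "P1 *\<^sub>v g \<in> I" unfolding I_def mat_image_def using g by auto
    thus ?thesis unfolding sumUW[symmetric] vsum_def by auto
  qed
  have Dker: "x = 0\<^sub>v m" if x: "x \<in> carrier_vec m" and Dx: "D *\<^sub>v x = 0\<^sub>v m" for x
  proof -
    define \<alpha> where "\<alpha> = 0\<^sub>v k @\<^sub>v x"
    have \<alpha>c: "\<alpha> \<in> carrier_vec n" unfolding \<alpha>_def using x nkm by auto
    have P\<alpha>: "?P *\<^sub>v \<alpha> = (B *\<^sub>v x) @\<^sub>v 0\<^sub>v m"
      unfolding Peq \<alpha>_def
      using four_block_mat_mult_vec[OF Ac Bc Cc Dc zero_carrier_vec x] Ac Bc Cc Dc x Dx
      by auto
    have P\<alpha>U: "?P *\<^sub>v \<alpha> \<in> U" unfolding P\<alpha> U_def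
      using app_in_tangent[of "B *\<^sub>v x" k "0\<^sub>v m" m n] mult_mat_vec_carrier[OF Bc x] nkm by simp
    have orth: "\<alpha> \<bullet> u = 0" if "u \<in> U" for u
      unfolding \<alpha>_def using ortho_tangent[OF x _ nkm] that U_def by auto
    obtain g0 where g0: "g0 \<in> carrier_vec n" "?P *\<^sub>v \<alpha> = P1 *\<^sub>v g0"
      using P\<alpha>U UI unfolding I_def mat_image_def by auto
    have k1: "\<alpha> \<bullet> (P2 *\<^sub>v \<kappa>) = 0" if \<kappa>: "\<kappa> \<in> mat_kernel P1" for \<kappa>
    proof -
      have \<kappa>c: "\<kappa> \<in> carrier_vec n" and P1\<kappa>: "P1 *\<^sub>v \<kappa> = 0\<^sub>v n"
        using mat_kernelD[OF P1c \<kappa>] by auto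
      have e1: "\<kappa> \<bullet> (?P *\<^sub>v \<alpha>) = 0"
        using g0 skew_pair[OF P1 \<kappa>c g0(1)] P1\<kappa> by simp
      have e2: "\<kappa> \<bullet> (P1 *\<^sub>v \<alpha>) = 0"
        using skew_pair[OF P1 \<kappa>c \<alpha>c] P1\<kappa> \<alpha>c by simp
      have "\<kappa> \<bullet> (?P *\<^sub>v \<alpha>) = \<kappa> \<bullet> (P2 *\<^sub>v \<alpha>) - lam * (\<kappa> \<bullet> (P1 *\<^sub>v \<alpha>))"
        unfolding pencil_vec[OF P1c P2c \<alpha>c]
        using scalar_prod_minus_distrib[of \<kappa> n "P2 *\<^sub>v \<alpha>" "lam \<cdot>\<^sub>v (P1 *\<^sub>v \<alpha>)"] \<kappa>c P1c P2c \<alpha>c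
        by auto
      hence "\<kappa> \<bullet> (P2 *\<^sub>v \<alpha>) = 0" using e1 e2 by simp
      thus ?thesis using skew_pair[OF P2 \<alpha>c \<kappa>c] by simp
    qed
    have k2: "\<alpha> \<bullet> (P1 *\<^sub>v g) = 0" if g: "g \<in> carrier_vec n" for g
    proof -
      obtain u w where uw: "u \<in> U" "w \<in> W" "P1 *\<^sub>v g = u + w" using Icases[OF g] by auto
      obtain \<kappa> where \<kappa>: "\<kappa> \<in> mat_kernel P1" "w = P2 *\<^sub>v \<kappa>" using uw(2) unfolding W_def by auto
      have wc: "w \<in> carrier_vec n" using \<kappa>(2) P2c by (simp add: carrier_dim_vec)
      have "\<alpha> \<bullet> (P1 *\<^sub>v g) = \<alpha> \<bullet> u + \<alpha> \<bullet> w"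
        unfolding uw(3) using scalar_prod_add_distrib[OF \<alpha>c _ wc, of u] uw Ucar by auto
      thus ?thesis using orth[OF uw(1)] k1[OF \<kappa>(1)] \<kappa>(2) by simp
    qed
    have P1\<alpha>: "P1 *\<^sub>v \<alpha> = 0\<^sub>v n"
    proof (rule zero_by_pairing)
      show "P1 *\<^sub>v \<alpha> \<in> carrier_vec n" using P1c by (simp add: carrier_dim_vec)
      fix g :: "real vec" assume g: "g \<in> carrier_vec n"
      show "g \<bullet> (P1 *\<^sub>v \<alpha>) = 0" using skew_pair[OF P1 g \<alpha>c] k2[OF g] by simp
    qed
    have P2\<alpha>: "P2 *\<^sub>v \<alpha> = ?P *\<^sub>v \<alpha>"
      proof -
      have "P2 *\<^sub>v \<alpha> \<in> carrier_vec n" using P2c by (simp add: carrier_dim_vec)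
      thus ?thesis unfolding pencil_vec[OF P1c P2c \<alpha>c] P1\<alpha> by simp
    qed
    have \<alpha>k: "\<alpha> \<in> mat_kernel P1" using P1\<alpha> \<alpha>c P1c by (intro mat_kernelI) auto
    have "P2 *\<^sub>v \<alpha> \<in> (\<lambda>a. P2 *\<^sub>v a) ` mat_kernel P1" using \<alpha>k by (rule imageI)
    hence "P2 *\<^sub>v \<alpha> \<in> W" unfolding W_def using P2\<alpha> P\<alpha>U UI I_def by auto
    moreover have "P2 *\<^sub>v \<alpha> \<in> U" using P2\<alpha> P\<alpha>U by simp
    ultimately have "P2 *\<^sub>v \<alpha> = 0\<^sub>v n" using capUW by auto
    hence "\<alpha> \<in> mat_kernel P2" using \<alpha>c P2c by (intro mat_kernelI) auto
    hence "\<alpha> = 0\<^sub>v n" using \<alpha>k kernels by auto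
    hence "0\<^sub>v k @\<^sub>v x = 0\<^sub>v k @\<^sub>v 0\<^sub>v m" unfolding \<alpha>_def nkm zero_app .
    thus ?thesis using append_vec_eq[of "0\<^sub>v k" k "0\<^sub>v k" x "0\<^sub>v m"] by simp
  qed
  have detD: "det D \<noteq> 0"
    using det_0_iff_vec_prod_zero_field[OF Dc] Dker by auto
  have unit: "D \<in> Units (ring_mat TYPE(real) m ())" by (rule det_non_zero_imp_unit[OF Dc detD])
  obtain Di where Di: "mat_inverse D = Some Di"
    using mat_inverse(1)[OF Dc, of "()"] unit by (cases "mat_inverse D") auto
  have DDi: "D * Di = 1\<^sub>m m" and DiD: "Di * D = 1\<^sub>m m" and Dic: "Di \<in> carrier_mat m m"
    using mat_inverse(2)[OF Dc Di] by auto
  have minvD: "minv D = Di" unfolding minv_def Di by simp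
  have invD: "invertible_mat D"
    unfolding invertible_mat_def inverts_mat_def square_mat.simps using Dc Dic DDi DiD by auto
  have nk: "n - k = m" using m_def by simp
  define S where "S = A - B * Di * C"
  have DiCc: "Di * C \<in> carrier_mat m k" using Dic Cc by auto
  have BDiCc: "B * Di * C \<in> carrier_mat k k" using Bc Dic Cc by auto
  have Sc: "S \<in> carrier_mat k k" unfolding S_def using minus_carrier_mat[OF BDiCc, of A] Ac by simp
  have Sv: "S *\<^sub>v v = A *\<^sub>v v - B *\<^sub>v (Di *\<^sub>v (C *\<^sub>v v))" if v: "v \<in> carrier_vec k" for v
  proof -
    have "S *\<^sub>v v = A *\<^sub>v v - (B * Di * C) *\<^sub>v v"
      unfolding S_def by (rule minus_mult_distrib_mat_vec[OF Ac BDiCc v])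
    also have "(B * Di * C) *\<^sub>v v = B *\<^sub>v (Di *\<^sub>v (C *\<^sub>v v))"
      unfolding assoc_mult_mat[OF Bc Dic Cc] assoc_mult_mat_vec[OF Bc DiCc v] assoc_mult_mat_vec[OF Dic Cc v] ..
    finally show ?thesis .
  qed
  have partb: "\<forall>v \<in> carrier_vec k.
          (\<exists>vh \<in> carrier_vec n. vec_first vh k = v
              \<and> ?P *\<^sub>v vh \<in> adapted_tangent n k)
        \<and> (\<forall>vh \<in> carrier_vec n. vec_first vh k = v
              \<and> ?P *\<^sub>v vh \<in> adapted_tangent n k
              \<longrightarrow> ?P *\<^sub>v vh = (S *\<^sub>v v) @\<^sub>v 0\<^sub>v m)"
  proof (rule ballI, rule conjI)
    fix v :: "real vec" assume v: "v \<in> carrier_vec k"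
    have Cv: "C *\<^sub>v v \<in> carrier_vec m" using Cc v by simp
    have wc: "Di *\<^sub>v (C *\<^sub>v v) \<in> carrier_vec m" using Dic Cv by simp
    define y where "y = - (Di *\<^sub>v (C *\<^sub>v v))"
    have yc: "y \<in> carrier_vec m" unfolding y_def using wc by simp
    have Dy: "D *\<^sub>v y = - (C *\<^sub>v v)"
    proof -
      have "D *\<^sub>v (Di *\<^sub>v (C *\<^sub>v v)) = (D * Di) *\<^sub>v (C *\<^sub>v v)" using Dc Dic Cv by simp
      also have "\<dots> = C *\<^sub>v v" unfolding DDi using Cv by simp
      finally show ?thesis unfolding y_def using mat_vec_uminus[OF Dc wc] by simp
    qed
    have By: "A *\<^sub>v v + B *\<^sub>v y = S *\<^sub>v v"
    proof -
      have "B *\<^sub>v y = - (B *\<^sub>v (Di *\<^sub>v (C *\<^sub>v v)))" unfolding y_def using mat_vec_uminus[OF Bc wc] .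
      moreover have "A *\<^sub>v v \<in> carrier_vec k" using Ac v by simp
      moreover have "B *\<^sub>v (Di *\<^sub>v (C *\<^sub>v v)) \<in> carrier_vec k" using Bc wc by simp
      ultimately show ?thesis unfolding Sv[OF v] using minus_add_uminus_vec by metis
    qed
    have Pvy: "?P *\<^sub>v (v @\<^sub>v y) = (S *\<^sub>v v) @\<^sub>v 0\<^sub>v m"
    proof -
      have "?P *\<^sub>v (v @\<^sub>v y) = (A *\<^sub>v v + B *\<^sub>v y) @\<^sub>v (C *\<^sub>v v + D *\<^sub>v y)"
        unfolding Peq by (rule four_block_mat_mult_vec[OF Ac Bc Cc Dc v yc])
      also have "C *\<^sub>v v + D *\<^sub>v y = 0\<^sub>v m" unfolding Dy using Cv by simp
      finally show ?thesis unfolding By .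
    qed
    have Svc: "S *\<^sub>v v \<in> carrier_vec k" using Sc v by simp
    show "\<exists>vh \<in> carrier_vec n. vec_first vh k = v \<and> ?P *\<^sub>v vh \<in> adapted_tangent n k"
    proof (intro bexI conjI)
      show "v @\<^sub>v y \<in> carrier_vec n" using v yc nkm by simp
      show "vec_first (v @\<^sub>v y) k = v" using vec_first_app[OF v] .
      show "?P *\<^sub>v (v @\<^sub>v y) \<in> adapted_tangent n k"
        unfolding Pvy using app_in_tangent[OF Svc _ nkm, of "0\<^sub>v m"] by simp
    qed
    show "\<forall>vh \<in> carrier_vec n. vec_first vh k = v
              \<and> ?P *\<^sub>v vh \<in> adapted_tangent n k
              \<longrightarrow> ?P *\<^sub>v vh = (S *\<^sub>v v) @\<^sub>v 0\<^sub>v m"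
    proof (intro ballI impI)
      fix vh assume vh: "vh \<in> carrier_vec n"
        and h: "vec_first vh k = v \<and> ?P *\<^sub>v vh \<in> adapted_tangent n k"
      define z where "z = vec_last vh m"
      have zc: "z \<in> carrier_vec m" unfolding z_def by simp
      have vhe: "vh = v @\<^sub>v z" unfolding z_def using h vh nkm vec_first_last_append[of vh k m] by simp
      have Pz: "?P *\<^sub>v vh = (A *\<^sub>v v + B *\<^sub>v z) @\<^sub>v (C *\<^sub>v v + D *\<^sub>v z)"
        unfolding Peq vhe by (rule four_block_mat_mult_vec[OF Ac Bc Cc Dc v zc])
      have c1: "A *\<^sub>v v + B *\<^sub>v z \<in> carrier_vec k" using Ac Bc v zc by simp
      have c2: "D *\<^sub>v z \<in> carrier_vec m" using Dc zc by simp
      have z0: "C *\<^sub>v v + D *\<^sub>v z = 0\<^sub>v m"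
        using h Pz app_in_tangent[OF c1 _ nkm, of "C *\<^sub>v v + D *\<^sub>v z"] Cv c2 by simp
      have "D *\<^sub>v z = - (C *\<^sub>v v)" by (rule add_eq_zero_vec[OF Cv c2 z0])
      hence "Di *\<^sub>v (D *\<^sub>v z) = y" unfolding y_def using mat_vec_uminus[OF Dic Cv] by simp
      moreover have "Di *\<^sub>v (D *\<^sub>v z) = z"
      proof -
        have "Di *\<^sub>v (D *\<^sub>v z) = (Di * D) *\<^sub>v z" using Dic Dc zc by simp
        thus ?thesis unfolding DiD using zc by simp
      qed
      ultimately have "z = y" by simp
      thus "?P *\<^sub>v vh = (S *\<^sub>v v) @\<^sub>v 0\<^sub>v m" unfolding vhe using Pvy by simp
    qed
  qed
  have partc: "?P = four_block_mat S B (0\<^sub>m m k) D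
          * four_block_mat (1\<^sub>m k) (0\<^sub>m k m) (Di * C) (1\<^sub>m m)"
  proof -
    have e: "four_block_mat S B (0\<^sub>m m k) D * four_block_mat (1\<^sub>m k) (0\<^sub>m k m) (Di * C) (1\<^sub>m m)
      = four_block_mat (S * 1\<^sub>m k + B * (Di * C)) (S * 0\<^sub>m k m + B * 1\<^sub>m m)
          (0\<^sub>m m k * 1\<^sub>m k + D * (Di * C)) (0\<^sub>m m k * 0\<^sub>m k m + D * 1\<^sub>m m)"
      by (rule mult_four_block_mat[OF Sc Bc zero_carrier_mat Dc one_carrier_mat zero_carrier_mat DiCc one_carrier_mat])
    have e1: "S * 1\<^sub>m k + B * (Di * C) = A"
    proof -
      have "B * (Di * C) = B * Di * C" using Bc Dic Cc by simp
      moreover have "S * 1\<^sub>m k = S" using Sc by simp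
      ultimately show ?thesis unfolding S_def using minus_plus_mat[OF Ac BDiCc] by simp
    qed
    have e2: "S * 0\<^sub>m k m + B * 1\<^sub>m m = B" using Sc Bc by simp
    have e3: "0\<^sub>m m k * 1\<^sub>m k + D * (Di * C) = C"
    proof -
      have "D * (Di * C) = (D * Di) * C" using Dc Dic Cc by simp
      thus ?thesis unfolding DDi using Cc by simp
    qed
    have e4: "0\<^sub>m m k * 0\<^sub>m k m + D * 1\<^sub>m m = D" using Dc by simp
    show ?thesis unfolding e e1 e2 e3 e4 using Peq .
  qed
  show ?thesis using invD partb partc unfolding minvD nk S_def by simp
qed

end
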